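(* Let $G=(V,E)$ be a finite, simple, connected $K_w$-minor-free graph and let $U\subseteq V$ with $|U|\ge\max(w,4)$. Then every node of $U$ that participates in the maximum number of good quadruples in $U$ (among all nodes of $U$) is $U$-good.
   Context: The interval $I(u,v)$ is the set of nodes on at least one shortest $u$–$v$ path in $G$. A quadruple in $U$ is a set $\{(a,b),(c,d)\}$ of two unordered pairs with $a,b,c,d\in U$ distinct; it is good if $I(a,b)\cap I(c,d)\ne\emptyset$; a node participates in it if it is one of $a,b,c,d$. Let $q(U)$ and $q_{\mathrm{good}}(U)$ be the numbers of quadruples and of good quadruples in $U$, and $\epsilon_U=q_{\mathrm{good}}(U)/(8q(U))$. A node $a\in U$ is $U$-good if there is a subset $U_a\subseteq U$ of size at least $\lceil 4\epsilon_U(|U|-1)\rceil$ such that for every $b\in U_a$ the number of pairs $c,d\in U$ for which $\{(a,b),(c,d)\}$ is a good quadruple is at least $\lceil 4\epsilon_U\binom{|U|-2}{2}\rceil$. *)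

theory Defs
  imports Complex_Main
begin

definition simple_graph :: "'a set \<Rightarrow> ('a \<Rightarrow> 'a \<Rightarrow> bool) \<Rightarrow> bool" where
  "simple_graph V E \<longleftrightarrow> finite V \<and> (\<forall>x y. E x y \<longrightarrow> x \<in> V \<and> y \<in> V)
     \<and> (\<forall>x y. E x y \<longrightarrow> E y x) \<and> (\<forall>x. \<not> E x x)"

definition connected_set :: "('a \<Rightarrow> 'a \<Rightarrow> bool) \<Rightarrow> 'a set \<Rightarrow> bool" where
  "connected_set E S \<longleftrightarrow> (\<forall>u\<in>S. \<forall>v\<in>S. (\<lambda>x y. E x y \<and> x \<in> S \<and> y \<in> S)\<^sup>*\<^sup>* u v)"

definition connected_graph :: "'a set \<Rightarrow> ('a \<Rightarrow> 'a \<Rightarrow> bool) \<Rightarrow> bool" where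
  "connected_graph V E \<longleftrightarrow> V \<noteq> {} \<and> connected_set E V"

definition has_complete_minor :: "'a set \<Rightarrow> ('a \<Rightarrow> 'a \<Rightarrow> bool) \<Rightarrow> nat \<Rightarrow> bool" where
  "has_complete_minor V E w \<longleftrightarrow> (\<exists>B :: nat \<Rightarrow> 'a set.
      (\<forall>i<w. B i \<noteq> {} \<and> B i \<subseteq> V \<and> connected_set E (B i))
    \<and> (\<forall>i<w. \<forall>j<w. i \<noteq> j \<longrightarrow> B i \<inter> B j = {})
    \<and> (\<forall>i<w. \<forall>j<w. i \<noteq> j \<longrightarrow> (\<exists>x\<in>B i. \<exists>y\<in>B j. E x y)))"

definition walk :: "'a set \<Rightarrow> ('a \<Rightarrow> 'a \<Rightarrow> bool) \<Rightarrow> 'a list \<Rightarrow> bool" where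
  "walk V E xs \<longleftrightarrow> xs \<noteq> [] \<and> set xs \<subseteq> V \<and> (\<forall>i. Suc i < length xs \<longrightarrow> E (xs ! i) (xs ! Suc i))"

definition gdist :: "'a set \<Rightarrow> ('a \<Rightarrow> 'a \<Rightarrow> bool) \<Rightarrow> 'a \<Rightarrow> 'a \<Rightarrow> nat" where
  "gdist V E u v = (LEAST n. \<exists>xs. walk V E xs \<and> hd xs = u \<and> last xs = v \<and> length xs = Suc n)"

definition interval :: "'a set \<Rightarrow> ('a \<Rightarrow> 'a \<Rightarrow> bool) \<Rightarrow> 'a \<Rightarrow> 'a \<Rightarrow> 'a set" where
  "interval V E u v = {x. \<exists>xs. walk V E xs \<and> hd xs = u \<and> last xs = v
      \<and> length xs = Suc (gdist V E u v) \<and> x \<in> set xs}"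

(* quadruple {(a,b),(c,d)} represented as the set {{a,b},{c,d}} *)
definition quadruples :: "'a set \<Rightarrow> 'a set set set" where
  "quadruples U = {{{a, b}, {c, d}} | a b c d.
      a \<in> U \<and> b \<in> U \<and> c \<in> U \<and> d \<in> U \<and> distinct [a, b, c, d]}"

definition good_quadruples :: "'a set \<Rightarrow> ('a \<Rightarrow> 'a \<Rightarrow> bool) \<Rightarrow> 'a set \<Rightarrow> 'a set set set" where
  "good_quadruples V E U = {{{a, b}, {c, d}} | a b c d.
      a \<in> U \<and> b \<in> U \<and> c \<in> U \<and> d \<in> U \<and> distinct [a, b, c, d]
      \<and> interval V E a b \<inter> interval V E c d \<noteq> {}}"

definition q :: "'a set \<Rightarrow> nat" where
  "q U = card (quadruples U)"

definition q_good :: "'a set \<Rightarrow> ('a \<Rightarrow> 'a \<Rightarrow> bool) \<Rightarrow> 'a set \<Rightarrow> nat" where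
  "q_good V E U = card (good_quadruples V E U)"

definition eps :: "'a set \<Rightarrow> ('a \<Rightarrow> 'a \<Rightarrow> bool) \<Rightarrow> 'a set \<Rightarrow> real" where
  "eps V E U = real (q_good V E U) / (8 * real (q U))"

definition participation :: "'a set \<Rightarrow> ('a \<Rightarrow> 'a \<Rightarrow> bool) \<Rightarrow> 'a set \<Rightarrow> 'a \<Rightarrow> nat" where
  "participation V E U x = card {Q \<in> good_quadruples V E U. x \<in> \<Union>Q}"

definition good_partners :: "'a set \<Rightarrow> ('a \<Rightarrow> 'a \<Rightarrow> bool) \<Rightarrow> 'a set \<Rightarrow> 'a \<Rightarrow> 'a \<Rightarrow> nat" where
  "good_partners V E U a b = card {P. \<exists>c d. P = {c, d} \<and> c \<in> U \<and> d \<in> U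
      \<and> {{a, b}, {c, d}} \<in> good_quadruples V E U}"

definition U_good :: "'a set \<Rightarrow> ('a \<Rightarrow> 'a \<Rightarrow> bool) \<Rightarrow> 'a set \<Rightarrow> 'a \<Rightarrow> bool" where
  "U_good V E U a \<longleftrightarrow> a \<in> U \<and> (\<exists>Ua \<subseteq> U.
      int (card Ua) \<ge> \<lceil>4 * eps V E U * (real (card U) - 1)\<rceil>
    \<and> (\<forall>b\<in>Ua. int (good_partners V E U a b)
          \<ge> \<lceil>4 * eps V E U * real ((card U - 2) choose 2)\<rceil>))"

end

theory Submission
  imports Defs
begin

lemma pairs_eq_distinct:
  assumes "{{a,b},{c,d}} = {{a',b'},{c',d'::'a}}" "distinct [a',b',c',d']"
  shows "distinct [a,b,c,d] \<and> {a,b,c,d} = {a',b',c',d'}"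
proof -
  have u: "{a,b,c,d} = {a',b',c',d'}" using arg_cong[OF assms(1), of Union] by auto
  have ab: "{a,b} = {a',b'} \<or> {a,b} = {c',d'}" using assms(1) by (metis insertCI insertE singletonD)
  have cd: "{c,d} = {a',b'} \<or> {c,d} = {c',d'}" using assms(1) by (metis insertCI insertE singletonD)
  have ne: "{a,b} \<noteq> {c,d}"
  proof
    assume "{a,b} = {c,d}"
    then have "{{a',b'},{c',d'}} = {{a,b}}" using assms(1) by simp
    then have "{a',b'} = {c',d'}" by (metis insertCI singletonD)
    then show False using assms(2) by (metis insertCI insertE singletonD distinct_length_2_or_more distinct.simps(2) list.set_intros(1))
  qed
  have "{a,b} = {a',b'} \<and> {c,d} = {c',d'} \<or> {a,b} = {c',d'} \<and> {c,d} = {a',b'}" using ab cd ne by auto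
  then have "distinct [a,b,c,d]" using assms(2) by (auto simp: doubleton_eq_iff)
  with u show ?thesis by simp
qed

lemma quad_mem:
  assumes "{{a,b},{c,d}} \<in> quadruples U"
  shows "distinct [a,b,c,d] \<and> a \<in> U \<and> b \<in> U \<and> c \<in> U \<and> d \<in> U"
proof -
  from assms obtain a' b' c' d' where h: "{{a,b},{c,d}} = {{a',b'},{c',d'}}" "a' \<in> U" "b' \<in> U" "c' \<in> U" "d' \<in> U" "distinct [a',b',c',d']"
    unfolding quadruples_def by blast
  from pairs_eq_distinct[OF h(1) h(6)] h(2-5) have "distinct [a,b,c,d]" "{a,b,c,d} \<subseteq> U" by auto
  then show ?thesis by auto
qed

definition partners :: "'a set \<Rightarrow> 'a set set set \<Rightarrow> 'a \<Rightarrow> 'a \<Rightarrow> 'a set set" where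
  "partners U S x b = {P. \<exists>c d. P = {c, d} \<and> c \<in> U \<and> d \<in> U \<and> {{x, b}, {c, d}} \<in> S}"

lemma decomp:
  assumes S: "S \<subseteq> quadruples U" and fin: "finite U" and x: "x \<in> U"
  shows "card {Q \<in> S. x \<in> \<Union>Q} = (\<Sum>b\<in>U - {x}. card (partners U S x b))"
proof -
  let ?f = "\<lambda>(b, P). {{x, b}, P}"
  let ?A = "Sigma (U - {x}) (partners U S x)"
  have finP: "finite (partners U S x b)" for b
  proof -
    have "partners U S x b \<subseteq> Pow U" unfolding partners_def by auto
    then show ?thesis using fin by (meson finite_Pow_iff finite_subset)
  qed
  have inj: "inj_on ?f ?A"
  proof (rule inj_onI)
    fix u v assume u: "u \<in> ?A" and v: "v \<in> ?A" and uv: "?f u = ?f v"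
    obtain b P where bP: "u = (b, P)" by (metis surj_pair)
    obtain b' P' where bP': "v = (b', P')" by (metis surj_pair)
    have b: "b \<in> U" "b \<noteq> x" and P: "P \<in> partners U S x b" using u bP by auto
    have P': "P' \<in> partners U S x b'" using v bP' by auto
    have eq: "{{x, b}, P} = {{x, b'}, P'}" using uv bP bP' by simp
    obtain c d where cd: "P = {c,d}" "{{x, b}, {c, d}} \<in> S" using P unfolding partners_def by blast
    obtain c' d' where cd': "P' = {c',d'}" "{{x, b'}, {c', d'}} \<in> S" using P' unfolding partners_def by blast
    have d1: "distinct [x,b,c,d]" using quad_mem[OF subsetD[OF S cd(2)]] by simp
    have d2: "distinct [x,b',c',d']" using quad_mem[OF subsetD[OF S cd'(2)]] by simp
    have xP': "x \<notin> P'" using cd'(1) d2 by auto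
    have xP: "x \<notin> P" using cd(1) d1 by auto
    have "{x,b} \<in> {{x, b'}, P'}" by (subst eq[symmetric]) simp
    moreover have "{x,b} \<noteq> P'" using xP' by blast
    ultimately have "{x,b} = {x,b'}" by blast
    then have "b \<in> {x,b'}" by blast
    then have "b = b'" using b by blast
    moreover have "P = P'"
    proof -
      have "P \<in> {{x, b}, P'}" using eq \<open>b = b'\<close> by blast
      moreover have "P \<noteq> {x,b}" using xP by blast
      ultimately show ?thesis by blast
    qed
    ultimately show "u = v" using bP bP' by simp
  qed
  have img: "?f ` ?A = {Q \<in> S. x \<in> \<Union>Q}"
  proof
    show "?f ` ?A \<subseteq> {Q \<in> S. x \<in> \<Union>Q}" unfolding partners_def by auto
  next
    show "{Q \<in> S. x \<in> \<Union>Q} \<subseteq> ?f ` ?A"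
    proof (rule subsetI)
      fix Q assume "Q \<in> {Q \<in> S. x \<in> \<Union>Q}"
      then have Q: "Q \<in> S" "x \<in> \<Union>Q" by auto
      then obtain a b c d where h: "Q = {{a,b},{c,d}}" "a \<in> U" "b \<in> U" "c \<in> U" "d \<in> U" "distinct [a,b,c,d]"
        using S unfolding quadruples_def by blast
      have "x = a \<or> x = b \<or> x = c \<or> x = d" using Q(2) h(1) by auto
      then show "Q \<in> ?f ` ?A"
      proof (elim disjE)
        assume "x = a"
        then show ?thesis using h Q(1) unfolding partners_def
          by (intro image_eqI[where x="(b, {c,d})"]) auto
      next
        assume "x = b"
        moreover have "Q = {{b,a},{c,d}}" using h(1) by (simp add: insert_commute)
        ultimately show ?thesis using h Q(1) unfolding partners_def
          by (intro image_eqI[where x="(a, {c,d})"]) auto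
      next
        assume "x = c"
        moreover have "Q = {{c,d},{a,b}}" using h(1) by (simp add: insert_commute)
        ultimately show ?thesis using h Q(1) unfolding partners_def
          by (intro image_eqI[where x="(d, {a,b})"]) auto
      next
        assume "x = d"
        moreover have "Q = {{d,c},{a,b}}" using h(1) by (simp add: insert_commute)
        ultimately show ?thesis using h Q(1) unfolding partners_def
          by (intro image_eqI[where x="(c, {a,b})"]) auto
      qed
    qed
  qed
  have "card {Q \<in> S. x \<in> \<Union>Q} = card ?A" using card_image[OF inj] img by simp
  also have "\<dots> = (\<Sum>b\<in>U - {x}. card (partners U S x b))"
    using fin finP by (simp add: card_SigmaI)
  finally show ?thesis .
qed

lemma quads_sub: "quadruples U \<subseteq> Pow (Pow U)"
  unfolding quadruples_def by auto

lemma fin_quads: "finite U \<Longrightarrow> finite (quadruples U)"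
  using quads_sub by (meson finite_Pow_iff finite_subset)

lemma card_union_quad:
  assumes "Q \<in> quadruples U" shows "\<Union>Q \<subseteq> U" "card (\<Union>Q) = 4"
proof -
  obtain a b c d where h: "Q = {{a,b},{c,d}}" "a \<in> U" "b \<in> U" "c \<in> U" "d \<in> U" "distinct [a,b,c,d]"
    using assms unfolding quadruples_def by blast
  have "\<Union>Q = {a,b,c,d}" using h(1) by auto
  then show "\<Union>Q \<subseteq> U" "card (\<Union>Q) = 4" using h by auto
qed

lemma sum_part:
  assumes fin: "finite U" and S: "S \<subseteq> quadruples U"
  shows "(\<Sum>x\<in>U. card {Q \<in> S. x \<in> \<Union>Q}) = 4 * card S"
proof -
  have finS: "finite S" using fin_quads[OF fin] S finite_subset by blast
  have "(\<Sum>x\<in>U. card {Q \<in> S. x \<in> \<Union>Q}) = (\<Sum>x\<in>U. \<Sum>Q\<in>S. if x \<in> \<Union>Q then 1 else 0)"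
    using finS by (simp add: sum.If_cases Int_def)
  also have "\<dots> = (\<Sum>Q\<in>S. \<Sum>x\<in>U. if x \<in> \<Union>Q then 1 else 0)"
    by (rule sum.swap)
  also have "\<dots> = (\<Sum>Q\<in>S. card (\<Union>Q))"
  proof (rule sum.cong[OF refl])
    fix Q assume "Q \<in> S"
    then have "\<Union>Q \<subseteq> U" using card_union_quad S by blast
    then have "{x \<in> U. x \<in> \<Union>Q} = \<Union>Q" by auto
    then show "(\<Sum>x\<in>U. if x \<in> \<Union>Q then 1 else 0) = card (\<Union>Q)"
      using fin by (simp add: sum.If_cases Int_def)
  qed
  also have "\<dots> = (\<Sum>Q\<in>S. 4)"
    using card_union_quad(2) S by (intro sum.cong refl) blast
  also have "\<dots> = 4 * card S" by simp
  finally show ?thesis .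
qed

lemma quad_partners:
  assumes fin: "finite U" and x: "x \<in> U" and b: "b \<in> U" and xb: "x \<noteq> b"
  shows "card (partners U (quadruples U) x b) = (card U - 2) choose 2"
proof -
  have eq: "partners U (quadruples U) x b = {P. P \<subseteq> U - {x,b} \<and> card P = 2}"
  proof (rule set_eqI, rule iffI)
    fix P assume "P \<in> partners U (quadruples U) x b"
    then obtain c d where cd: "P = {c,d}" "{{x, b}, {c, d}} \<in> quadruples U" unfolding partners_def by blast
    have "distinct [x,b,c,d] \<and> x \<in> U \<and> b \<in> U \<and> c \<in> U \<and> d \<in> U" using quad_mem[OF cd(2)] .
    then show "P \<in> {P. P \<subseteq> U - {x,b} \<and> card P = 2}" using cd(1) by auto
  next
    fix P assume "P \<in> {P. P \<subseteq> U - {x,b} \<and> card P = 2}"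
    then have P: "P \<subseteq> U - {x,b}" "card P = 2" by auto
    then obtain c d where cd: "P = {c,d}" "c \<noteq> d" by (meson card_2_iff)
    have "c \<in> U" "d \<in> U" "c \<noteq> x" "c \<noteq> b" "d \<noteq> x" "d \<noteq> b" using P(1) cd(1) by auto
    then have "{{x, b}, {c, d}} \<in> quadruples U"
      unfolding quadruples_def using cd(2) x b xb
      by (intro CollectI exI[of _ x] exI[of _ b] exI[of _ c] exI[of _ d]) auto
    then show "P \<in> partners U (quadruples U) x b" unfolding partners_def using cd \<open>c \<in> U\<close> \<open>d \<in> U\<close> by blast
  qed
  have "card (U - {x,b}) = card U - 2" using fin x b xb by (simp add: card_Diff_subset)
  then show ?thesis unfolding eq using n_subsets[of "U - {x,b}" 2] fin by simp
qed

lemma good_sub: "good_quadruples V E U \<subseteq> quadruples U"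
  unfolding good_quadruples_def quadruples_def by blast

lemma partners_mono: "S \<subseteq> S' \<Longrightarrow> partners U S x b \<subseteq> partners U S' x b"
  unfolding partners_def by blast

lemma arith_key:
  fixes e k M p n r :: real
  assumes e: "e \<ge> 0" and M: "M > 0" and k: "k \<ge> 0"
    and p1: "p \<ge> 8 * e * (n - 1) * M" and p2: "p \<le> k * M + r * (4 * e * M)" and r: "r = n - 1 - k"
  shows "k \<ge> 4 * e * (n - 1)"
proof -
  have "(k + 4 * e * (n - 1 - k)) * M \<ge> (8 * e * (n - 1)) * M"
    using p1 p2 r by (simp add: algebra_simps)
  then have h: "k + 4 * e * (n - 1 - k) \<ge> 8 * e * (n - 1)" using M by simp
  have "e * k \<ge> 0" using e k by simp
  then show ?thesis using h by (simp add: algebra_simps)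
qed

lemma ceil_nat: "x \<le> real k \<Longrightarrow> \<lceil>x\<rceil> \<le> int k"
  by (simp add: ceiling_le_iff)

theorem mainTheorem7:
  fixes V :: "'a set" and E :: "'a \<Rightarrow> 'a \<Rightarrow> bool" and U :: "'a set" and w :: nat and a :: 'a
  assumes "simple_graph V E"
    and "connected_graph V E"
    and "\<not> has_complete_minor V E w"
    and "U \<subseteq> V"
    and "card U \<ge> max w 4"
    and "a \<in> U"
    and "\<forall>x\<in>U. participation V E U x \<le> participation V E U a"
  shows "U_good V E U a"
proof -
  have finU: "finite U" using assms(1,4) unfolding simple_graph_def using finite_subset by blast
  define n where "n = card U"
  have n4: "n \<ge> 4" using assms(5) n_def by simp
  define M where "M = (n - 2) choose 2"
  have M1: "M \<ge> 1" unfolding M_def using n4 by (simp add: Suc_le_eq)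
  define G where "G = good_quadruples V E U"
  define g where "g b = good_partners V E U a b" for b
  have g_eq: "g b = card (partners U G a b)" for b
    by (simp add: g_def good_partners_def partners_def G_def)
  have gM: "g b \<le> M" if b: "b \<in> U - {a}" for b
  proof -
    have bU: "b \<in> U" "a \<noteq> b" using b by auto
    have c: "card (partners U (quadruples U) a b) = M"
      using quad_partners[OF finU assms(6) bU] by (simp add: M_def n_def)
    then have "finite (partners U (quadruples U) a b)" using M1 by (intro card_ge_0_finite) simp
    moreover have "partners U G a b \<subseteq> partners U (quadruples U) a b"
      unfolding G_def by (rule partners_mono[OF good_sub])
    ultimately show ?thesis unfolding g_eq using c card_mono by metis
  qed
  have pa: "participation V E U a = (\<Sum>b\<in>U - {a}. g b)"
    unfolding participation_def g_eq G_def using decomp[OF good_sub finU assms(6)] by simp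
  have qd: "4 * q U = n * ((n - 1) * M)"
  proof -
    have "4 * q U = (\<Sum>x\<in>U. card {Q \<in> quadruples U. x \<in> \<Union>Q})"
      unfolding q_def using sum_part[OF finU order_refl] by simp
    also have "\<dots> = (\<Sum>x\<in>U. (n - 1) * M)"
    proof (rule sum.cong[OF refl])
      fix x assume x: "x \<in> U"
      have "card {Q \<in> quadruples U. x \<in> \<Union>Q} = (\<Sum>b\<in>U - {x}. card (partners U (quadruples U) x b))"
        using decomp[OF order_refl finU x] .
      also have "\<dots> = (\<Sum>b\<in>U - {x}. M)"
        using quad_partners[OF finU x] by (intro sum.cong refl) (auto simp: M_def n_def)
      also have "\<dots> = (n - 1) * M" using finU x by (simp add: n_def)
      finally show "card {Q \<in> quadruples U. x \<in> \<Union>Q} = (n - 1) * M" .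
    qed
    also have "\<dots> = n * ((n - 1) * M)" by (simp add: n_def)
    finally show ?thesis .
  qed
  have qg: "4 * q_good V E U \<le> n * participation V E U a"
  proof -
    have "4 * q_good V E U = (\<Sum>x\<in>U. participation V E U x)"
      unfolding q_good_def participation_def using sum_part[OF finU good_sub] by simp
    also have "\<dots> \<le> (\<Sum>x\<in>U. participation V E U a)"
      using assms(7) by (intro sum_mono) auto
    also have "\<dots> = n * participation V E U a" by (simp add: n_def)
    finally show ?thesis .
  qed
  define e where "e = eps V E U"
  have "n * ((n - 1) * M) > 0" using n4 M1 by simp
  then have qpos: "q U > 0" using qd by linarith
  have e0: "e \<ge> 0" unfolding e_def eps_def by simp
  have qge: "real (q_good V E U) = 8 * e * real (q U)" unfolding e_def eps_def using qpos by simp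
  define T where "T = 4 * e * real M"
  define R where "R = U - {a}"
  define Ua where "Ua = {b \<in> R. T \<le> real (g b)}"
  have finR: "finite R" using finU R_def by simp
  have cardR: "card R = n - 1" using finU assms(6) R_def n_def by simp
  have UaR: "Ua \<subseteq> R" unfolding Ua_def by auto
  have cardRU: "card (R - Ua) = card R - card Ua" using finR UaR by (simp add: card_Diff_subset finite_subset)
  have kle: "card Ua \<le> card R" using finR UaR card_mono by blast
  define p where "p = real (participation V E U a)"
  have p_sum: "p = (\<Sum>b\<in>Ua. real (g b)) + (\<Sum>b\<in>R - Ua. real (g b))"
    unfolding p_def pa R_def[symmetric] using sum.subset_diff[OF UaR finR, of "\<lambda>b. real (g b)"] by simp
  have s1: "(\<Sum>b\<in>Ua. real (g b)) \<le> real (card Ua) * real M"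
    using sum_bounded_above[of Ua "\<lambda>b. real (g b)" "real M"] gM UaR R_def by force
  have s2: "(\<Sum>b\<in>R - Ua. real (g b)) \<le> real (card (R - Ua)) * T"
    using sum_bounded_above[of "R - Ua" "\<lambda>b. real (g b)" T] Ua_def by force
  have p2: "p \<le> real (card Ua) * real M + real (card (R - Ua)) * (4 * e * real M)"
    using p_sum s1 s2 T_def by simp
  have p1: "p \<ge> 8 * e * (real n - 1) * real M"
  proof -
    have qdr: "4 * real (q U) = real n * ((real n - 1) * real M)"
      using arg_cong[OF qd, of real] n4 by (simp add: of_nat_diff)
    have "real n * (8 * e * (real n - 1) * real M) = 8 * e * (4 * real (q U))"
      unfolding qdr by (simp add: algebra_simps)
    also have "\<dots> = 4 * real (q_good V E U)" using qge by (simp add: algebra_simps)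
    also have "\<dots> \<le> real n * p" unfolding p_def using qg by (metis of_nat_le_iff of_nat_mult of_nat_numeral)
    finally show ?thesis using n4 by simp
  qed
  have key: "real (card Ua) \<ge> 4 * e * (real n - 1)"
    apply (rule arith_key[OF e0 _ _ p1 p2])
    using M1 cardRU cardR kle n4 by auto
  show ?thesis
    unfolding U_good_def
  proof (intro conjI exI[of _ Ua])
    show "a \<in> U" by fact
    show "Ua \<subseteq> U" using UaR R_def by auto
    show "\<lceil>4 * eps V E U * (real (card U) - 1)\<rceil> \<le> int (card Ua)"
      using key ceil_nat e_def n_def by simp
    show "\<forall>b\<in>Ua. \<lceil>4 * eps V E U * real ((card U - 2) choose 2)\<rceil> \<le> int (good_partners V E U a b)"
      using ceil_nat Ua_def T_def e_def M_def n_def g_def by simp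
  qed
qed

end
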